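(* Let $Q$ be a convex $k$-gon in $\mathbb{R}^2$ with vertices $v_0,\dots,v_{k-1}$ and the origin in its interior. Let $\Theta\subset\mathbb{S}^1$ be the set of directions of the vectors $v_j-v_i$, $i\neq j$, and let $\mathcal{I}$ be the collection of open arcs into which $\Theta$ partitions the unit circle $\mathbb{S}^1$. Then for all ordered pairs of distinct points $(p,q)$ in the plane such that the direction of $\vec{pq}$ lies in the same arc of $\mathcal{I}$, the sequence of edgelet labels along the bisector $b_{pq}$ (traced so that $p$ lies on its left side and $q$ on its right side) is the same.
   Context: A homothetic placement of $Q$ is $x+\lambda Q$ with center $x$ and $\lambda>0$; its edges are identified with the edges $e_0,\dots,e_{k-1}$ of $Q$. $d_Q(x,y)=\min\{\lambda\ge0: y\in x+\lambda Q\}$, and the bisector $b_{pq}=\{x: d_Q(x,p)=d_Q(x,q)\}$, i.e. the locus of centers of placements whose boundary contains $p$ and $q$. An edgelet of $b_{pq}$ with label $(e_i,e_j)$ is a maximal segment of $b_{pq}$ consisting of centers of placements in which $p$ lies in the relative interior of edge $e_i$ and $q$ in the relative interior of edge $e_j$; the bisector is the concatenation of its edgelets. *)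

theory Defs
  imports "HOL-Analysis.Analysis"
begin

definition cross2 :: "real^2 \<Rightarrow> real^2 \<Rightarrow> real" where
  "cross2 a b = a$1 * b$2 - a$2 * b$1"

text \<open>Strictly convex position in cyclic order: for every edge, all other vertices lie
  strictly on the same side of its supporting line (the same side for all edges).\<close>
definition convex_kgon :: "nat \<Rightarrow> (nat \<Rightarrow> real^2) \<Rightarrow> bool" where
  "convex_kgon k v \<longleftrightarrow> 3 \<le> k \<and>
     ((\<forall>i<k. \<forall>j<k. j \<noteq> i \<and> j \<noteq> Suc i mod k \<longrightarrow>
          0 < cross2 (v (Suc i mod k) - v i) (v j - v i)) \<or>
      (\<forall>i<k. \<forall>j<k. j \<noteq> i \<and> j \<noteq> Suc i mod k \<longrightarrow>
          cross2 (v (Suc i mod k) - v i) (v j - v i) < 0))"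

definition polygon :: "nat \<Rightarrow> (nat \<Rightarrow> real^2) \<Rightarrow> (real^2) set" where
  "polygon k v = convex hull (v ` {..<k})"

definition edge :: "nat \<Rightarrow> (nat \<Rightarrow> real^2) \<Rightarrow> nat \<Rightarrow> (real^2) set" where
  "edge k v i = closed_segment (v i) (v (Suc i mod k))"

definition placement :: "(real^2) set \<Rightarrow> real^2 \<Rightarrow> real \<Rightarrow> (real^2) set" where
  "placement S x r = (\<lambda>z. x + r *\<^sub>R z) ` S"

definition dQ :: "(real^2) set \<Rightarrow> real^2 \<Rightarrow> real^2 \<Rightarrow> real" where
  "dQ Q x y = Inf {r. 0 \<le> r \<and> y \<in> placement Q x r}"

definition bisector :: "(real^2) set \<Rightarrow> real^2 \<Rightarrow> real^2 \<Rightarrow> (real^2) set" where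
  "bisector Q p q = {x. dQ Q x p = dQ Q x q}"

definition has_label :: "nat \<Rightarrow> (nat \<Rightarrow> real^2) \<Rightarrow> real^2 \<Rightarrow> real^2 \<Rightarrow> real^2 \<Rightarrow> nat \<times> nat \<Rightarrow> bool" where
  "has_label k v p q x l \<longleftrightarrow> fst l < k \<and> snd l < k \<and> x \<in> bisector (polygon k v) p q \<and>
     p \<in> rel_interior (placement (edge k v (fst l)) x (dQ (polygon k v) x p)) \<and>
     q \<in> rel_interior (placement (edge k v (snd l)) x (dQ (polygon k v) x q))"

definition edgelet :: "nat \<Rightarrow> (nat \<Rightarrow> real^2) \<Rightarrow> real^2 \<Rightarrow> real^2 \<Rightarrow> (real^2) set \<Rightarrow> nat \<times> nat \<Rightarrow> bool" where
  "edgelet k v p q E l \<longleftrightarrow> E \<noteq> {} \<and> convex E \<and> E \<subseteq> {x. has_label k v p q x l} \<and>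
     (\<forall>F. convex F \<and> E \<subseteq> F \<and> F \<subseteq> {x. has_label k v p q x l} \<longrightarrow> F = E)"

text \<open>Left normal of u (u rotated by +90 degrees). Walking along the bisector in direction
  left_normal (q - p) keeps p on the left and q on the right.\<close>
definition left_normal :: "real^2 \<Rightarrow> real^2" where
  "left_normal u = (\<chi> i. if i = 1 then - (u$2) else u$1)"

definition edgelet_label_sequence ::
    "nat \<Rightarrow> (nat \<Rightarrow> real^2) \<Rightarrow> real^2 \<Rightarrow> real^2 \<Rightarrow> (nat \<times> nat) list \<Rightarrow> bool" where
  "edgelet_label_sequence k v p q L \<longleftrightarrow>
     (\<exists>Es. set Es = {(E, l). edgelet k v p q E l} \<and>
        sorted_wrt (\<lambda>a b. \<forall>x\<in>fst a. \<forall>y\<in>fst b.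
              x \<bullet> left_normal (q - p) < y \<bullet> left_normal (q - p)) Es \<and>
        L = map snd Es)"

definition directions :: "nat \<Rightarrow> (nat \<Rightarrow> real^2) \<Rightarrow> (real^2) set" where
  "directions k v = {sgn (v j - v i) | i j. i < k \<and> j < k \<and> i \<noteq> j}"

end

theory Submission
  imports Defs
begin

section \<open>Coordinate basics\<close>

lemma inner2: "(x::real^2) \<bullet> y = x$1*y$1 + x$2*y$2"
  by (simp add: inner_vec_def sum_2)

lemma vec2_eq: "(x::real^2) = y \<longleftrightarrow> x$1 = y$1 \<and> x$2 = y$2"
  by (simp add: vec_eq_iff forall_2)

lemma ln1 [simp]: "left_normal u $ 1 = - (u$2)" and ln2 [simp]: "left_normal u $ 2 = u$1"
  by (simp_all add: left_normal_def)

lemma cross2_inner: "cross2 e d = left_normal e \<bullet> d"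
  by (simp add: cross2_def inner2)

lemma cross2_add_right: "cross2 a (b + c) = cross2 a b + cross2 a c"
  and cross2_diff_right: "cross2 a (b - c) = cross2 a b - cross2 a c"
  and cross2_scaleR_right: "cross2 a (r *\<^sub>R b) = r * cross2 a b"
  and cross2_minus_right: "cross2 a (- b) = - cross2 a b"
  and cross2_self: "cross2 a a = 0"
  and cross2_zero: "cross2 a 0 = 0"
  by (simp_all add: cross2_def algebra_simps)

lemma ln_self: "w \<bullet> left_normal w = 0"
  by (simp add: inner2 algebra_simps)

lemma inner_ln_cross: "a \<bullet> left_normal w = - cross2 a w"
  by (simp add: inner2 cross2_def algebra_simps)

lemma par2:
  fixes a w :: "real^2"
  assumes "w \<noteq> 0" "a \<bullet> left_normal w = 0"
  shows "a = ((a \<bullet> w) / (w \<bullet> w)) *\<^sub>R w"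
proof -
  have ww: "w \<bullet> w \<noteq> 0" using assms(1) by simp
  have "(w \<bullet> w) *\<^sub>R a = (a \<bullet> w) *\<^sub>R w"
    using assms(2) by (simp add: vec2_eq inner2 algebra_simps)
  then have h: "(w \<bullet> w) *\<^sub>R a = (a \<bullet> w) *\<^sub>R w" .
  have "a = inverse (w \<bullet> w) *\<^sub>R ((w \<bullet> w) *\<^sub>R a)" using ww by simp
  also have "\<dots> = ((a \<bullet> w) / (w \<bullet> w)) *\<^sub>R w" using h by (simp add: divide_inverse mult.commute)
  finally show ?thesis .
qed

lemma scaleR_cancel_w:
  fixes w :: "real^2"
  assumes "w \<noteq> 0" "r *\<^sub>R w = s *\<^sub>R w" shows "r = s"
  using assms by (metis scaleR_cancel_right)

locale kg =
  fixes k :: nat and v :: "nat \<Rightarrow> real^2" and \<sigma> :: real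
  assumes k3: "3 \<le> k"
    and sig: "\<sigma> = 1 \<or> \<sigma> = -1"
    and cvx: "\<forall>i<k. \<forall>j<k. j \<noteq> i \<and> j \<noteq> Suc i mod k \<longrightarrow>
          0 < \<sigma> * cross2 (v (Suc i mod k) - v i) (v j - v i)"
    and int0: "0 \<in> interior (polygon k v)"
begin

definition nx :: "nat \<Rightarrow> nat" where "nx i = Suc i mod k"
definition e :: "nat \<Rightarrow> real^2" where "e i = v (nx i) - v i"
definition F :: "nat \<Rightarrow> real^2 \<Rightarrow> real" where "F i z = \<sigma> * cross2 (e i) (z - v i)"
definition os :: "nat \<Rightarrow> (real^2) set" where "os i = open_segment (v i) (v (nx i))"
abbreviation "Q \<equiv> polygon k v"

lemma sig2: "\<sigma> * \<sigma> = 1" using sig by auto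

lemma nx_eq: "i < k \<Longrightarrow> nx i = (if Suc i = k then 0 else Suc i)"
  by (auto simp: nx_def)

lemma nx_lt: "i < k \<Longrightarrow> nx i < k"
  using k3 by (simp add: nx_def)

lemma nx_ne: "i < k \<Longrightarrow> nx i \<noteq> i"
  using k3 by (auto simp: nx_eq)

lemma nx_nx_ne: "i < k \<Longrightarrow> nx (nx i) \<noteq> i"
  using k3 by (auto simp: nx_eq nx_lt split: if_splits)

lemma nx_inj: "i < k \<Longrightarrow> j < k \<Longrightarrow> nx i = nx j \<Longrightarrow> i = j"
  using k3 by (auto simp: nx_eq split: if_splits)

lemma F_shift: "F i z = F i y + \<sigma> * cross2 (e i) (z - y)"
  by (simp add: F_def cross2_def algebra_simps)

lemma F_comb: "F i ((1 - t) *\<^sub>R a + t *\<^sub>R b) = (1 - t) * F i a + t * F i b"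
  by (simp add: F_def cross2_def algebra_simps)

lemma F_scale: "F i (s *\<^sub>R y) = s * F i y + (1 - s) * F i 0"
  by (simp add: F_def cross2_def algebra_simps)

lemma F_vi: "F i (v i) = 0" and F_vnx: "F i (v (nx i)) = 0"
  by (simp_all add: F_def e_def cross2_def)

lemma F_pos_vert: "i < k \<Longrightarrow> j < k \<Longrightarrow> j \<noteq> i \<Longrightarrow> j \<noteq> nx i \<Longrightarrow> 0 < F i (v j)"
  using cvx by (simp add: F_def e_def nx_def)

lemma F_nonneg_vert: "i < k \<Longrightarrow> j < k \<Longrightarrow> 0 \<le> F i (v j)"
  using F_pos_vert[of i j] F_vi[of i] F_vnx[of i] by (cases "j = i \<or> j = nx i") auto

lemma e_nz: "i < k \<Longrightarrow> e i \<noteq> 0"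
proof
  assume "i < k" "e i = 0"
  have "0 < F i (v (nx (nx i)))"
    using F_pos_vert[of i "nx (nx i)"] \<open>i<k\<close> nx_lt nx_nx_ne nx_inj nx_ne by metis
  moreover have "F i z = 0" for z using \<open>e i = 0\<close> by (simp add: F_def cross2_def)
  ultimately show False by simp
qed

lemma v_inj: "a < k \<Longrightarrow> b < k \<Longrightarrow> a \<noteq> b \<Longrightarrow> v a \<noteq> v b"
proof -
  assume ab: "a < k" "b < k" "a \<noteq> b"
  show "v a \<noteq> v b"
  proof (cases "b = nx a")
    case True then show ?thesis using e_nz[of a] ab by (auto simp: e_def)
  next
    case False
    then have "0 < F a (v b)" using F_pos_vert[of a b] ab by auto
    then show ?thesis using F_vi[of a] by auto
  qed
qed

lemma vnx_ne: "i < k \<Longrightarrow> v i \<noteq> v (nx i)"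
  using v_inj nx_lt nx_ne by metis

lemma convex_Q: "convex Q" by (simp add: polygon_def)

lemma v_in_Q: "i < k \<Longrightarrow> v i \<in> Q"
  by (simp add: polygon_def hull_inc)

lemma F_Q: assumes "i < k" "z \<in> Q" shows "0 \<le> F i z"
proof -
  have eq: "{z. 0 \<le> F i z} = {z. (\<sigma> *\<^sub>R left_normal (e i)) \<bullet> z \<ge> (\<sigma> *\<^sub>R left_normal (e i)) \<bullet> v i}"
    by (auto simp: F_def cross2_inner inner_diff_right right_diff_distrib)
  have "convex {z. 0 \<le> F i z}" unfolding eq by (rule convex_halfspace_ge)
  moreover have "v ` {..<k} \<subseteq> {z. 0 \<le> F i z}" using F_nonneg_vert assms(1) by auto
  ultimately have "Q \<subseteq> {z. 0 \<le> F i z}" unfolding polygon_def by (rule hull_minimal[rotated])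
  then show ?thesis using assms by auto
qed

lemma os_Q: "i < k \<Longrightarrow> os i \<subseteq> Q"
  using closed_segment_subset[OF v_in_Q v_in_Q convex_Q] segment_open_subset_closed nx_lt
  unfolding os_def by blast

lemma cs_Q: "i < k \<Longrightarrow> closed_segment (v i) (v (nx i)) \<subseteq> Q"
  using closed_segment_subset[OF v_in_Q v_in_Q convex_Q] nx_lt by blast

lemma F_cs0: "y \<in> closed_segment (v i) (v (nx i)) \<Longrightarrow> F i y = 0"
  by (auto simp: in_segment F_comb F_vi F_vnx)

lemma F_os0: "y \<in> os i \<Longrightarrow> F i y = 0"
  by (auto simp: os_def in_segment F_comb F_vi F_vnx)

lemma F_strict:
  assumes "i < k" "j < k" "j \<noteq> i" "z \<in> os j" shows "0 < F i z"
proof -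
  obtain t where t: "0 < t" "t < 1" "z = (1 - t) *\<^sub>R v j + t *\<^sub>R v (nx j)"
    using assms(4) by (auto simp: os_def in_segment)
  have Fz: "F i z = (1 - t) * F i (v j) + t * F i (v (nx j))" using t(3) F_comb by simp
  have n1: "0 \<le> F i (v j)" "0 \<le> F i (v (nx j))"
    using F_nonneg_vert[OF assms(1,2)] F_nonneg_vert[OF assms(1) nx_lt[OF assms(2)]] by auto
  show ?thesis
  proof (cases "j = nx i")
    case True
    have a1: "nx j \<noteq> i" using True nx_nx_ne[OF assms(1)] by simp
    have a2: "nx j \<noteq> nx i" using nx_inj[OF assms(2,1)] assms(3) by blast
    have "0 < F i (v (nx j))" by (rule F_pos_vert[OF assms(1) nx_lt[OF assms(2)] a1 a2])
    then show ?thesis using Fz n1 t by (simp add: add_nonneg_pos)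
  next
    case False
    then have "0 < F i (v j)" using F_pos_vert[OF assms(1,2,3)] by blast
    then show ?thesis using Fz n1 t by (simp add: add_pos_nonneg)
  qed
qed

lemma ball0: obtains \<epsilon> where "\<epsilon> > 0" "ball 0 \<epsilon> \<subseteq> Q"
  using int0 mem_interior by blast

lemma F0_pos: assumes "i < k" shows "0 < F i 0"
proof -
  obtain \<epsilon> where ep: "\<epsilon> > 0" "ball 0 \<epsilon> \<subseteq> Q" by (rule ball0)
  define E where "E = e i"
  have E0: "E \<noteq> 0" using e_nz assms E_def by simp
  have nE: "norm E > 0" using E0 by simp
  define z where "z = (- (\<sigma> * \<epsilon> / (2 * norm E))) *\<^sub>R left_normal E"
  have nl: "norm (left_normal E) = norm E"
    by (simp add: norm_eq_sqrt_inner inner2 algebra_simps)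
  have "\<bar>\<sigma>\<bar> = 1" using sig by auto
  then have "norm z = \<epsilon> / 2" using nE ep(1) by (simp add: z_def nl abs_mult)
  then have "z \<in> Q" using ep by (auto simp: subset_iff)
  then have "0 \<le> F i z" using F_Q assms by auto
  moreover have "F i z = F i 0 + \<sigma> * cross2 E z" using F_shift[of i z 0] E_def by simp
  moreover have cE: "cross2 E (left_normal E) = norm E * norm E"
    by (simp add: cross2_def norm_eq_sqrt_inner inner2 power2_eq_square[symmetric])
  moreover have "cross2 E z = (- (\<sigma> * \<epsilon> / (2 * norm E))) * (norm E * norm E)"
    by (simp only: z_def cross2_scaleR_right cE)
  then have "\<sigma> * cross2 E z = - (\<sigma> * \<sigma>) * (\<epsilon> / (2 * norm E)) * (norm E * norm E)"
    by simp
  then have "\<sigma> * cross2 E z = - (\<epsilon> / 2) * norm E"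
    using nE sig2 by (simp add: field_simps)
  ultimately have "0 \<le> F i 0 - (\<epsilon> / 2) * norm E" by simp
  moreover have "0 < (\<epsilon> / 2) * norm E" using ep nE by simp
  ultimately show ?thesis by linarith
qed

end

lemma aff_cs: "(\<lambda>z. x + r *\<^sub>R z) ` closed_segment a b = closed_segment (x + r *\<^sub>R a) (x + r *\<^sub>R b)"
proof
  show "(\<lambda>z. x + r *\<^sub>R z) ` closed_segment a b \<subseteq> closed_segment (x + r *\<^sub>R a) (x + r *\<^sub>R b)"
  proof
    fix p assume "p \<in> (\<lambda>z. x + r *\<^sub>R z) ` closed_segment a b"
    then obtain u where u: "0 \<le> u" "u \<le> 1" "p = x + r *\<^sub>R ((1 - u) *\<^sub>R a + u *\<^sub>R b)"
      by (auto simp: in_segment)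
    show "p \<in> closed_segment (x + r *\<^sub>R a) (x + r *\<^sub>R b)"
      unfolding in_segment by (rule exI[of _ u]) (use u in \<open>auto simp: algebra_simps\<close>)
  qed
  show "closed_segment (x + r *\<^sub>R a) (x + r *\<^sub>R b) \<subseteq> (\<lambda>z. x + r *\<^sub>R z) ` closed_segment a b"
  proof
    fix p assume "p \<in> closed_segment (x + r *\<^sub>R a) (x + r *\<^sub>R b)"
    then obtain u where u: "0 \<le> u" "u \<le> 1" "p = (1 - u) *\<^sub>R (x + r *\<^sub>R a) + u *\<^sub>R (x + r *\<^sub>R b)"
      by (auto simp: in_segment)
    have "p = x + r *\<^sub>R ((1 - u) *\<^sub>R a + u *\<^sub>R b)" using u(3) by (simp add: algebra_simps)
    moreover have "(1 - u) *\<^sub>R a + u *\<^sub>R b \<in> closed_segment a b" using u by (auto simp: in_segment)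
    ultimately show "p \<in> (\<lambda>z. x + r *\<^sub>R z) ` closed_segment a b" by blast
  qed
qed

lemma aff_os: "(\<lambda>z. x + r *\<^sub>R z) ` open_segment a b = open_segment (x + r *\<^sub>R a) (x + r *\<^sub>R b)"
  if "r \<noteq> 0" "a \<noteq> b"
proof
  have ne: "x + r *\<^sub>R a \<noteq> x + r *\<^sub>R b" using that by simp
  show "(\<lambda>z. x + r *\<^sub>R z) ` open_segment a b \<subseteq> open_segment (x + r *\<^sub>R a) (x + r *\<^sub>R b)"
  proof
    fix p assume "p \<in> (\<lambda>z. x + r *\<^sub>R z) ` open_segment a b"
    then obtain u where u: "0 < u" "u < 1" "p = x + r *\<^sub>R ((1 - u) *\<^sub>R a + u *\<^sub>R b)"
      by (auto simp: in_segment)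
    show "p \<in> open_segment (x + r *\<^sub>R a) (x + r *\<^sub>R b)"
      unfolding in_segment using ne by (intro conjI exI[of _ u]) (use u in \<open>auto simp: algebra_simps\<close>)
  qed
  show "open_segment (x + r *\<^sub>R a) (x + r *\<^sub>R b) \<subseteq> (\<lambda>z. x + r *\<^sub>R z) ` open_segment a b"
  proof
    fix p assume "p \<in> open_segment (x + r *\<^sub>R a) (x + r *\<^sub>R b)"
    then obtain u where u: "0 < u" "u < 1" "p = (1 - u) *\<^sub>R (x + r *\<^sub>R a) + u *\<^sub>R (x + r *\<^sub>R b)"
      by (auto simp: in_segment)
    have "p = x + r *\<^sub>R ((1 - u) *\<^sub>R a + u *\<^sub>R b)" using u(3) by (simp add: algebra_simps)
    moreover have "(1 - u) *\<^sub>R a + u *\<^sub>R b \<in> open_segment a b" using u that by (auto simp: in_segment)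
    ultimately show "p \<in> (\<lambda>z. x + r *\<^sub>R z) ` open_segment a b" by blast
  qed
qed

lemma pl_mem: "p \<in> placement S x r \<longleftrightarrow> (\<exists>z\<in>S. p = x + r *\<^sub>R z)"
  by (auto simp: placement_def)

context kg
begin

lemma dQ_edge:
  assumes "i < k" "lam > 0" "y \<in> closed_segment (v i) (v (nx i))"
  shows "dQ Q x (x + lam *\<^sub>R y) = lam"
  unfolding dQ_def
proof (rule cInf_eq_minimum)
  show "lam \<in> {r. 0 \<le> r \<and> x + lam *\<^sub>R y \<in> placement Q x r}"
    using assms cs_Q by (auto simp: pl_mem)
  fix r assume "r \<in> {r. 0 \<le> r \<and> x + lam *\<^sub>R y \<in> placement Q x r}"
  then obtain z where z: "0 \<le> r" "z \<in> Q" "lam *\<^sub>R y = r *\<^sub>R z" by (auto simp: pl_mem)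
  have Fy: "F i y = 0" using F_cs0 assms by simp
  have F0: "0 < F i 0" using F0_pos assms by simp
  show "lam \<le> r"
  proof (rule ccontr)
    assume "\<not> lam \<le> r"
    show False
    proof (cases "r = 0")
      case True
      then have "y = 0" using z assms by simp
      then show False using Fy F0 by simp
    next
      case False
      then have rp: "r > 0" using z by simp
      have "inverse r *\<^sub>R (r *\<^sub>R z) = z" using rp by simp
      then have "z = inverse r *\<^sub>R (lam *\<^sub>R y)" using z(3) by simp
      then have "z = (lam / r) *\<^sub>R y" by (simp add: divide_inverse mult.commute)
      then have "F i z = (1 - lam / r) * F i 0" using F_scale Fy by simp
      moreover have "1 - lam / r < 0" using \<open>\<not> lam \<le> r\<close> rp by (simp add: field_simps)
      ultimately have "F i z < 0" using F0 by (simp add: mult_neg_pos)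
      then show False using F_Q assms z by fastforce
    qed
  qed
qed

lemma dQ_nonneg: "0 \<le> dQ Q x p"
  unfolding dQ_def
proof (rule cInf_greatest)
  obtain \<epsilon> where ep: "\<epsilon> > 0" "ball 0 \<epsilon> \<subseteq> Q" by (rule ball0)
  show "{r. 0 \<le> r \<and> p \<in> placement Q x r} \<noteq> {}"
  proof (cases "p = x")
    case True
    have "v 0 \<in> Q" using v_in_Q k3 by simp
    then have "p \<in> placement Q x 0" using True by (auto simp: pl_mem)
    then show ?thesis by auto
  next
    case False
    define r where "r = 2 * norm (p - x) / \<epsilon>"
    have rp: "r > 0" using False ep by (simp add: r_def)
    define z where "z = (1 / r) *\<^sub>R (p - x)"
    have "norm z = \<epsilon> / 2" using rp ep False by (simp add: z_def r_def)
    then have "z \<in> Q" using ep by (auto simp: subset_iff)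
    moreover have "p = x + r *\<^sub>R z" using rp by (simp add: z_def)
    ultimately have "p \<in> placement Q x r" by (auto simp: pl_mem)
    then show ?thesis using rp by (auto intro!: exI[of _ r])
  qed
qed auto

lemma relint_pl:
  assumes "i < k" "r > 0"
  shows "p \<in> rel_interior (placement (edge k v i) x r) \<longleftrightarrow> (\<exists>y\<in>os i. p = x + r *\<^sub>R y)"
proof -
  have ne: "x + r *\<^sub>R v i \<noteq> x + r *\<^sub>R v (nx i)" using vnx_ne assms by simp
  have "placement (edge k v i) x r = closed_segment (x + r *\<^sub>R v i) (x + r *\<^sub>R v (nx i))"
    unfolding placement_def edge_def nx_def[symmetric] by (rule aff_cs)
  then have "rel_interior (placement (edge k v i) x r) = open_segment (x + r *\<^sub>R v i) (x + r *\<^sub>R v (nx i))"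
    using ne by (simp add: rel_interior_closed_segment)
  also have "\<dots> = (\<lambda>z. x + r *\<^sub>R z) ` os i"
    unfolding os_def using aff_os[of r "v i" "v (nx i)" x] assms vnx_ne by simp
  finally show ?thesis by auto
qed

lemma relint_pl0:
  "rel_interior (placement (edge k v i) x 0) = {x}"
proof -
  have "placement (edge k v i) x 0 = {x}"
    by (auto simp: placement_def edge_def)
  then show ?thesis by simp
qed

lemma HL:
  assumes "p \<noteq> q"
  shows "has_label k v p q x (i, j) \<longleftrightarrow> i < k \<and> j < k \<and>
     (\<exists>lam>0. \<exists>y\<in>os i. \<exists>z\<in>os j. p = x + lam *\<^sub>R y \<and> q = x + lam *\<^sub>R z)"
proof
  assume h: "has_label k v p q x (i, j)"
  define lam where "lam = dQ Q x p"
  have ij: "i < k" "j < k" using h by (auto simp: has_label_def)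
  have lq: "dQ Q x q = lam" using h by (auto simp: has_label_def bisector_def lam_def)
  have hp: "p \<in> rel_interior (placement (edge k v i) x lam)"
    and hq: "q \<in> rel_interior (placement (edge k v j) x lam)"
    using h lq by (auto simp: has_label_def lam_def)
  have "lam \<noteq> 0"
  proof
    assume "lam = 0"
    then have "p = x" "q = x" using hp hq relint_pl0 by auto
    then show False using assms by simp
  qed
  moreover have "0 \<le> lam" unfolding lam_def by (rule dQ_nonneg)
  ultimately have lp: "lam > 0" by simp
  obtain y where y: "y \<in> os i" "p = x + lam *\<^sub>R y" using hp relint_pl[OF ij(1) lp] by blast
  obtain z where z: "z \<in> os j" "q = x + lam *\<^sub>R z" using hq relint_pl[OF ij(2) lp] by blast
  show "i < k \<and> j < k \<and> (\<exists>lam>0. \<exists>y\<in>os i. \<exists>z\<in>os j. p = x + lam *\<^sub>R y \<and> q = x + lam *\<^sub>R z)"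
    using ij lp y z by blast
next
  assume "i < k \<and> j < k \<and> (\<exists>lam>0. \<exists>y\<in>os i. \<exists>z\<in>os j. p = x + lam *\<^sub>R y \<and> q = x + lam *\<^sub>R z)"
  then obtain lam y z where h: "i < k" "j < k" "lam > 0" "y \<in> os i" "z \<in> os j"
    "p = x + lam *\<^sub>R y" "q = x + lam *\<^sub>R z" by blast
  have dp: "dQ Q x p = lam" using dQ_edge h segment_open_subset_closed unfolding os_def by blast
  have dq: "dQ Q x q = lam" using dQ_edge h segment_open_subset_closed unfolding os_def by blast
  show "has_label k v p q x (i, j)"
    unfolding has_label_def using h dp dq relint_pl[of i lam] relint_pl[of j lam]
    by (auto simp: bisector_def)
qed

end

lemma btw:
  fixes a b t :: real
  assumes "a \<noteq> b" "0 < t" "t < 1"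
  shows "min a b < (1 - t) * a + t * b \<and> (1 - t) * a + t * b < max a b"
proof (cases "a < b")
  case True
  have "0 < t * (b - a)" "0 < (1 - t) * (b - a)" using True assms by auto
  then show ?thesis using True by (auto simp: min_def max_def algebra_simps)
next
  case False
  then have ab: "b < a" using assms by simp
  have "0 < t * (a - b)" "0 < (1 - t) * (a - b)" using ab assms by auto
  then show ?thesis using ab by (auto simp: min_def max_def algebra_simps)
qed

lemma btw_inv1:
  fixes a b c :: real
  assumes "a \<noteq> b" "min a b < c" "c < max a b"
  shows "\<exists>t. 0 < t \<and> t < 1 \<and> (1 - t) * a + t * b = c"
proof -
  define t where "t = (c - a) / (b - a)"
  have eq: "t * (b - a) = c - a" using assms(1) by (simp add: t_def)
  have "(1 - t) * a + t * b = a + t * (b - a)" by (simp add: algebra_simps)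
  also have "\<dots> = c" using eq by simp
  finally have E: "(1 - t) * a + t * b = c" .
  have "0 < t \<and> t < 1"
  proof (cases "a < b")
    case True
    then have "a < c" "c < b" using assms by (auto simp: min_def max_def)
    then show ?thesis using True by (auto simp: t_def field_simps)
  next
    case False
    then have "b < a" "b < c" "c < a" using assms by (auto simp: min_def max_def)
    then show ?thesis by (auto simp: t_def field_simps)
  qed
  then show ?thesis using E by blast
qed

lemmas btw_inv = btw_inv1

lemma h1: "0 < (X::real) \<Longrightarrow> 0 < s * X \<Longrightarrow> 0 < s" by (simp add: zero_less_mult_iff)
lemma h2: "(X::real) < 0 \<Longrightarrow> 0 < s * X \<Longrightarrow> s < 0" by (simp add: zero_less_mult_iff)
lemma h3: "0 < (X::real) \<Longrightarrow> 0 \<le> s * X \<Longrightarrow> 0 \<le> s" by (simp add: zero_le_mult_iff)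
lemma h4: "(X::real) < 0 \<Longrightarrow> 0 \<le> s * X \<Longrightarrow> s \<le> 0" by (simp add: zero_le_mult_iff)
lemma h5: "0 < (X::real) \<Longrightarrow> 0 < - s * X \<Longrightarrow> s < 0" by (auto simp: mult_less_0_iff)
lemma h6: "(X::real) < 0 \<Longrightarrow> 0 < - s * X \<Longrightarrow> 0 < s" by (auto simp: mult_less_0_iff)
lemma h7: "0 < (m::real) \<Longrightarrow> 0 < m * X \<Longrightarrow> 0 < X" by (simp add: zero_less_mult_iff)
lemma h8: "0 < (m::real) \<Longrightarrow> 0 < - m * X \<Longrightarrow> X < 0" by (auto simp: mult_less_0_iff)

context kg
begin

definition cv :: "real^2 \<Rightarrow> nat \<Rightarrow> real" where "cv w a = v a \<bullet> left_normal w"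
definition mn :: "(nat \<Rightarrow> real) \<Rightarrow> nat \<Rightarrow> nat \<Rightarrow> nat" where "mn c a b = (if c a \<le> c b then a else b)"
definition mx :: "(nat \<Rightarrow> real) \<Rightarrow> nat \<Rightarrow> nat \<Rightarrow> nat" where "mx c a b = (if c a \<le> c b then b else a)"
definition lo :: "real^2 \<Rightarrow> nat \<times> nat \<Rightarrow> nat" where
  "lo w l = mx (cv w) (mn (cv w) (fst l) (nx (fst l))) (mn (cv w) (snd l) (nx (snd l)))"
definition hi :: "real^2 \<Rightarrow> nat \<times> nat \<Rightarrow> nat" where
  "hi w l = mn (cv w) (mx (cv w) (fst l) (nx (fst l))) (mx (cv w) (snd l) (nx (snd l)))"
definition ent :: "real^2 \<Rightarrow> nat \<Rightarrow> bool" where "ent w i \<longleftrightarrow> 0 < \<sigma> * cross2 (e i) w"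
definition ext :: "real^2 \<Rightarrow> nat \<Rightarrow> bool" where "ext w i \<longleftrightarrow> \<sigma> * cross2 (e i) w < 0"
definition Lc :: "real^2 \<Rightarrow> (nat \<times> nat) set" where
  "Lc w = {l. fst l < k \<and> snd l < k \<and> ent w (fst l) \<and> ext w (snd l) \<and> cv w (lo w l) < cv w (hi w l)}"

lemma cv_mn: "c (mn c a b) = min (c a) (c b)" by (simp add: mn_def min_def)
lemma cv_mx: "c (mx c a b) = max (c a) (c b)" by (simp add: mx_def max_def)

lemma cv_lo: "cv w (lo w l) = max (min (cv w (fst l)) (cv w (nx (fst l)))) (min (cv w (snd l)) (cv w (nx (snd l))))"
  by (simp add: lo_def cv_mn cv_mx)
lemma cv_hi: "cv w (hi w l) = min (max (cv w (fst l)) (cv w (nx (fst l)))) (max (cv w (snd l)) (cv w (nx (snd l))))"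
  by (simp add: hi_def cv_mn cv_mx)

lemma Lc_fin: "finite (Lc w)"
proof -
  have "Lc w \<subseteq> {..<k} \<times> {..<k}" by (auto simp: Lc_def)
  then show ?thesis by (rule finite_subset) auto
qed

end

locale kgw = kg +
  fixes w :: "real^2"
  assumes w0: "w \<noteq> 0"
    and np: "\<forall>a<k. \<forall>b<k. a \<noteq> b \<longrightarrow> cross2 (v b - v a) w \<noteq> 0"
begin

abbreviation "n \<equiv> left_normal w"

lemma cross_e_nz: "i < k \<Longrightarrow> cross2 (e i) w \<noteq> 0"
  using np nx_lt nx_ne unfolding e_def by metis

lemma cv_ne: "i < k \<Longrightarrow> cv w i \<noteq> cv w (nx i)"
proof
  assume "i < k" "cv w i = cv w (nx i)"
  then have "e i \<bullet> n = 0" by (simp add: cv_def e_def inner_diff_left)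
  then show False using cross_e_nz \<open>i<k\<close> by (simp add: inner_ln_cross)
qed

lemma os_between:
  assumes "i < k" "y \<in> os i"
  shows "min (cv w i) (cv w (nx i)) < y \<bullet> n \<and> y \<bullet> n < max (cv w i) (cv w (nx i))"
proof -
  obtain t where t: "0 < t" "t < 1" "y = (1 - t) *\<^sub>R v i + t *\<^sub>R v (nx i)"
    using assms(2) by (auto simp: os_def in_segment)
  have "y \<bullet> n = (1 - t) * cv w i + t * cv w (nx i)"
    using t(3) by (simp add: cv_def inner_add_left)
  then show ?thesis using btw[OF cv_ne[OF assms(1)] t(1,2)] by simp
qed

lemma find_pt:
  assumes "i < k" "min (cv w i) (cv w (nx i)) < c" "c < max (cv w i) (cv w (nx i))"
  shows "\<exists>y\<in>os i. y \<bullet> n = c"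
proof -
  obtain t where t: "0 < t" "t < 1" "(1 - t) * cv w i + t * cv w (nx i) = c"
    using btw_inv[OF cv_ne[OF assms(1)] assms(2,3)] by blast
  define y where "y = (1 - t) *\<^sub>R v i + t *\<^sub>R v (nx i)"
  have "y \<in> os i" using t vnx_ne assms(1) unfolding os_def in_segment y_def by blast
  moreover have "y \<bullet> n = c" using t(3) by (simp add: y_def cv_def inner_add_left)
  ultimately show ?thesis by blast
qed

lemma par_w:
  assumes "a \<bullet> n = 0" obtains s where "a = s *\<^sub>R w"
  using par2[OF w0 assms] by blast

lemma sig0: "\<sigma> \<noteq> 0" using sig by auto

lemma chord_facts:
  assumes "i < k" "j < k" "y \<in> os i" "z \<in> os j" "z - y = m *\<^sub>R w" "m > 0"
  shows "i \<noteq> j \<and> ent w i \<and> ext w j \<and> y \<bullet> n = z \<bullet> n"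
proof -
  have Fz: "F i z = m * (\<sigma> * cross2 (e i) w)"
    using F_shift[of i z y] F_os0[OF assms(3)] assms(5) by (simp add: cross2_scaleR_right)
  have Fy: "F j y = - m * (\<sigma> * cross2 (e j) w)"
  proof -
    have "y - z = (- m) *\<^sub>R w" using assms(5) by (metis minus_diff_eq scaleR_minus_left)
    then show ?thesis using F_shift[of j y z] F_os0[OF assms(4)] by (simp add: cross2_scaleR_right cross2_minus_right)
  qed
  have ij: "i \<noteq> j"
  proof
    assume "i = j"
    then have "F i z = 0" using F_os0 assms(4) by simp
    then show False using Fz assms(6) sig0 cross_e_nz assms(1) by simp
  qed
  have "0 < F i z" using F_strict assms ij by simp
  then have en: "ent w i" using Fz assms(6) h7 unfolding ent_def by metis
  have "0 < F j y" using F_strict assms ij by simp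
  then have ex: "ext w j" using Fy assms(6) h8 unfolding ext_def by metis
  have "(z - y) \<bullet> n = 0" using assms(5) by (simp add: ln_self)
  then have "y \<bullet> n = z \<bullet> n" by (simp add: inner_diff_left)
  then show ?thesis using ij en ex by simp
qed

lemma lab_in:
  assumes "i < k" "j < k" "y \<in> os i" "z \<in> os j" "z - y = m *\<^sub>R w" "m > 0"
  shows "(i, j) \<in> Lc w \<and> cv w (lo w (i, j)) < y \<bullet> n \<and> y \<bullet> n < cv w (hi w (i, j))"
proof -
  have cf: "i \<noteq> j \<and> ent w i \<and> ext w j \<and> y \<bullet> n = z \<bullet> n" by (rule chord_facts[OF assms])
  have b1: "min (cv w i) (cv w (nx i)) < y \<bullet> n \<and> y \<bullet> n < max (cv w i) (cv w (nx i))"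
    using os_between assms by simp
  have b2: "min (cv w j) (cv w (nx j)) < z \<bullet> n \<and> z \<bullet> n < max (cv w j) (cv w (nx j))"
    using os_between assms by simp
  have "cv w (lo w (i, j)) < y \<bullet> n" "y \<bullet> n < cv w (hi w (i, j))"
    using b1 b2 cf by (simp_all add: cv_lo cv_hi)
  then show ?thesis using cf assms by (auto simp: Lc_def)
qed

lemma lab_ex:
  assumes "(i, j) \<in> Lc w"
  shows "\<exists>y\<in>os i. \<exists>z\<in>os j. \<exists>m>0. z - y = m *\<^sub>R w"
proof -
  have h: "i < k" "j < k" "ent w i" "ext w j" "cv w (lo w (i, j)) < cv w (hi w (i, j))"
    using assms by (auto simp: Lc_def)
  define c where "c = (cv w (lo w (i, j)) + cv w (hi w (i, j))) / 2"
  have c1: "cv w (lo w (i, j)) < c" "c < cv w (hi w (i, j))" using h(5) by (auto simp: c_def)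
  obtain y where y: "y \<in> os i" "y \<bullet> n = c"
    using find_pt[OF h(1)] c1 by (auto simp: cv_lo cv_hi)
  obtain z where z: "z \<in> os j" "z \<bullet> n = c"
    using find_pt[OF h(2)] c1 by (auto simp: cv_lo cv_hi)
  have "(z - y) \<bullet> n = 0" using y z by (simp add: inner_diff_left)
  then obtain s where s: "z - y = s *\<^sub>R w" by (rule par_w)
  have ij: "i \<noteq> j" using h(3,4) by (auto simp: ent_def ext_def)
  have "0 < F i z" using F_strict h ij z by simp
  moreover have "F i z = s * (\<sigma> * cross2 (e i) w)"
    using F_shift[of i z y] F_os0[OF y(1)] s by (simp add: cross2_scaleR_right)
  ultimately have "s > 0" using h(3) h1 unfolding ent_def by metis
  then show ?thesis using y z s by blast
qed

lemma ent_unique: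
  assumes "i < k" "i' < k" "ent w i" "ent w i'" "y \<in> os i" "y' \<in> os i'" "y \<bullet> n = y' \<bullet> n"
  shows "i = i'"
proof (rule ccontr)
  assume ne: "i \<noteq> i'"
  have "(y' - y) \<bullet> n = 0" using assms by (simp add: inner_diff_left)
  then obtain t where t: "y' - y = t *\<^sub>R w" by (rule par_w)
  have "0 < F i y'" using F_strict assms ne by simp
  moreover have "F i y' = t * (\<sigma> * cross2 (e i) w)"
    using F_shift[of i y' y] F_os0[OF assms(5)] t by (simp add: cross2_scaleR_right)
  ultimately have t1: "t > 0" using assms(3) h1 unfolding ent_def by metis
  have "0 < F i' y" using F_strict assms ne by simp
  moreover have "F i' y = - t * (\<sigma> * cross2 (e i') w)"
  proof -
    have "y - y' = (- t) *\<^sub>R w" using t by (metis minus_diff_eq scaleR_minus_left)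
    then show ?thesis using F_shift[of i' y y'] F_os0[OF assms(6)] by (simp add: cross2_scaleR_right cross2_minus_right)
  qed
  ultimately have "t < 0" using assms(4) h5 unfolding ent_def by metis
  then show False using t1 by simp
qed

lemma ext_unique:
  assumes "i < k" "i' < k" "ext w i" "ext w i'" "y \<in> os i" "y' \<in> os i'" "y \<bullet> n = y' \<bullet> n"
  shows "i = i'"
proof (rule ccontr)
  assume ne: "i \<noteq> i'"
  have "(y' - y) \<bullet> n = 0" using assms by (simp add: inner_diff_left)
  then obtain t where t: "y' - y = t *\<^sub>R w" by (rule par_w)
  have "0 < F i y'" using F_strict assms ne by simp
  moreover have "F i y' = t * (\<sigma> * cross2 (e i) w)"
    using F_shift[of i y' y] F_os0[OF assms(5)] t by (simp add: cross2_scaleR_right)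
  ultimately have t1: "t < 0" using assms(3) h2 unfolding ext_def by metis
  have "0 < F i' y" using F_strict assms ne by simp
  moreover have "F i' y = - t * (\<sigma> * cross2 (e i') w)"
  proof -
    have "y - y' = (- t) *\<^sub>R w" using t by (metis minus_diff_eq scaleR_minus_left)
    then show ?thesis using F_shift[of i' y y'] F_os0[OF assms(6)] by (simp add: cross2_scaleR_right cross2_minus_right)
  qed
  ultimately have "t > 0" using assms(4) h6 unfolding ext_def by metis
  then show False using t1 by simp
qed

lemma total:
  assumes "l \<in> Lc w" "l' \<in> Lc w" "l \<noteq> l'"
  shows "cv w (hi w l') \<le> cv w (lo w l) \<or> cv w (hi w l) \<le> cv w (lo w l')"
proof (rule ccontr)
  assume "\<not> ?thesis"
  then have a: "cv w (lo w l) < cv w (hi w l')" "cv w (lo w l') < cv w (hi w l)" by auto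
  obtain i j i' j' where l: "l = (i, j)" "l' = (i', j')" by (cases l, cases l') auto
  have h: "i < k" "j < k" "ent w i" "ext w j" "cv w (lo w l) < cv w (hi w l)"
    "i' < k" "j' < k" "ent w i'" "ext w j'" "cv w (lo w l') < cv w (hi w l')"
    using assms l by (auto simp: Lc_def)
  define c where "c = (max (cv w (lo w l)) (cv w (lo w l')) + min (cv w (hi w l)) (cv w (hi w l'))) / 2"
  have c1: "cv w (lo w l) < c" "c < cv w (hi w l)" "cv w (lo w l') < c" "c < cv w (hi w l')"
    using a h by (auto simp: c_def)
  obtain y where y: "y \<in> os i" "y \<bullet> n = c"
    using find_pt[OF h(1)] c1 l by (auto simp: cv_lo cv_hi)
  obtain z where z: "z \<in> os j" "z \<bullet> n = c"
    using find_pt[OF h(2)] c1 l by (auto simp: cv_lo cv_hi)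
  obtain y' where y': "y' \<in> os i'" "y' \<bullet> n = c"
    using find_pt[OF h(6)] c1 l by (auto simp: cv_lo cv_hi)
  obtain z' where z': "z' \<in> os j'" "z' \<bullet> n = c"
    using find_pt[OF h(7)] c1 l by (auto simp: cv_lo cv_hi)
  have yy: "y \<bullet> n = y' \<bullet> n" using y y' by simp
  have zz: "z \<bullet> n = z' \<bullet> n" using z z' by simp
  have ii: "i = i'" by (rule ent_unique[OF h(1,6,3,8) y(1) y'(1) yy])
  have jj: "j = j'" by (rule ext_unique[OF h(2,7,4,9) z(1) z'(1) zz])
  have "l = l'" using l ii jj by simp
  then show False using assms(3) by contradiction
qed

lemma lo_lt_hi: "l \<in> Lc w \<Longrightarrow> cv w (lo w l) < cv w (hi w l)"
  by (simp add: Lc_def)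

lemma ballw: obtains \<delta> where "\<delta> > 0" "\<delta> *\<^sub>R w \<in> Q" "(- \<delta>) *\<^sub>R w \<in> Q"
proof -
  obtain \<epsilon> where ep: "\<epsilon> > 0" "ball 0 \<epsilon> \<subseteq> Q" by (rule ball0)
  define \<delta> where "\<delta> = \<epsilon> / (2 * norm w)"
  have "norm (\<delta> *\<^sub>R w) = \<epsilon> / 2" "norm ((- \<delta>) *\<^sub>R w) = \<epsilon> / 2" "\<delta> > 0"
    using ep w0 by (auto simp: \<delta>_def)
  then show ?thesis using that ep by (auto simp: subset_iff)
qed

lemma CM:
  assumes "i < k" "j < k" "y \<in> os i" "ent w i" "z \<in> os j" "ext w j" "a \<in> Q" "b \<in> Q"
    "a \<bullet> n = y \<bullet> n" "b \<bullet> n = z \<bullet> n" "b - a = r *\<^sub>R w" "z - y = m *\<^sub>R w"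
  shows "r \<le> m"
proof -
  have "(a - y) \<bullet> n = 0" using assms by (simp add: inner_diff_left)
  then obtain s where s: "a - y = s *\<^sub>R w" by (rule par_w)
  have "(b - z) \<bullet> n = 0" using assms by (simp add: inner_diff_left)
  then obtain s' where s': "b - z = s' *\<^sub>R w" by (rule par_w)
  have "F i a = s * (\<sigma> * cross2 (e i) w)"
    using F_shift[of i a y] F_os0[OF assms(3)] s by (simp add: cross2_scaleR_right)
  moreover have "0 \<le> F i a" using F_Q assms by simp
  ultimately have s0: "s \<ge> 0" using assms(4) h3 unfolding ent_def by metis
  have "F j b = s' * (\<sigma> * cross2 (e j) w)"
    using F_shift[of j b z] F_os0[OF assms(5)] s' by (simp add: cross2_scaleR_right)
  moreover have "0 \<le> F j b" using F_Q assms by simp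
  ultimately have s'0: "s' \<le> 0" using assms(6) h4 unfolding ext_def by metis
  have "r *\<^sub>R w = (m + s' - s) *\<^sub>R w"
  proof -
    have "r *\<^sub>R w = (z + s' *\<^sub>R w) - (y + s *\<^sub>R w)" using assms(11) s s'
      by (metis add.commute diff_add_cancel)
    also have "\<dots> = (z - y) + (s' - s) *\<^sub>R w" by (simp add: algebra_simps)
    also have "\<dots> = (m + s' - s) *\<^sub>R w" using assms(12) by (simp add: algebra_simps)
    finally show ?thesis .
  qed
  then have "r = m + s' - s" using scaleR_cancel_w[OF w0] by blast
  then show ?thesis using s0 s'0 by simp
qed

end

context kgw
begin

lemma mono_chord:
  assumes "i < k" "j < k" "y \<in> os i" "z \<in> os j" "z - y = m *\<^sub>R w" "m > 0"
    "i' < k" "j' < k" "y' \<in> os i'" "z' \<in> os j'" "z' - y' = m' *\<^sub>R w" "m' > 0"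
    "y' \<bullet> n < y \<bullet> n"
  shows "(y' \<bullet> n) * m < (y \<bullet> n) * m'"
proof -
  have cf: "i \<noteq> j \<and> ent w i \<and> ext w j \<and> y \<bullet> n = z \<bullet> n" by (rule chord_facts[OF assms(1-6)])
  have cf': "i' \<noteq> j' \<and> ent w i' \<and> ext w j' \<and> y' \<bullet> n = z' \<bullet> n" by (rule chord_facts[OF assms(7-12)])
  obtain \<delta> where d: "\<delta> > 0" "\<delta> *\<^sub>R w \<in> Q" "(- \<delta>) *\<^sub>R w \<in> Q" by (rule ballw)
  have yQ: "y \<in> Q" "z \<in> Q" "y' \<in> Q" "z' \<in> Q" using os_Q assms by auto
  have wn: "w \<bullet> n = 0" by (rule ln_self)
  define c where "c = y \<bullet> n"
  define c' where "c' = y' \<bullet> n"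
  have cc: "c' < c" using assms(13) by (simp add: c_def c'_def)
  show ?thesis
  proof (cases "c' \<ge> 0")
    case True
    then have cpos: "c > 0" using cc by simp
    define t where "t = c' / c"
    have t0: "0 \<le> t" "t < 1" using True cpos cc by (auto simp: t_def field_simps)
    have ct: "c' = t * c" using cpos by (simp add: t_def)
    define a where "a = t *\<^sub>R y + (1 - t) *\<^sub>R ((- \<delta>) *\<^sub>R w)"
    define b where "b = t *\<^sub>R z + (1 - t) *\<^sub>R (\<delta> *\<^sub>R w)"
    have aQ: "a \<in> Q" unfolding a_def by (rule convexD[OF convex_Q yQ(1) d(3)]) (use t0 in auto)
    have bQ: "b \<in> Q" unfolding b_def by (rule convexD[OF convex_Q yQ(2) d(2)]) (use t0 in auto)
    have an: "a \<bullet> n = y' \<bullet> n" using ct wn by (simp add: a_def inner_add_left inner_diff_left c_def c'_def)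
    have bn: "b \<bullet> n = z' \<bullet> n" using ct wn cf cf' by (simp add: b_def inner_add_left inner_diff_left c_def c'_def)
    have "b - a = t *\<^sub>R (z - y) + ((1 - t) * \<delta> + (1 - t) * \<delta>) *\<^sub>R w"
      by (simp add: a_def b_def vec2_eq algebra_simps)
    also have "\<dots> = (t * m + 2 * (1 - t) * \<delta>) *\<^sub>R w" unfolding assms(5) by (simp add: vec2_eq algebra_simps)
    finally have ba: "b - a = (t * m + 2 * (1 - t) * \<delta>) *\<^sub>R w" .
    have "t * m + 2 * (1 - t) * \<delta> \<le> m'"
      using CM[OF assms(7,8,9) _ assms(10) _ aQ bQ an bn ba assms(11)] cf' by simp
    moreover have "0 < 2 * (1 - t) * \<delta>" using t0 d by simp
    ultimately have "t * m < m'" by linarith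
    then have "c * (t * m) < c * m'" using cpos by simp
    then show ?thesis using ct by (simp add: c_def c'_def algebra_simps)
  next
    case False
    note c'neg = False
    show ?thesis
    proof (cases "c \<le> 0")
      case True
      then have c'n: "c' < 0" using cc by simp
      define t where "t = c / c'"
      have t0: "0 \<le> t" "t < 1" using True c'n cc by (auto simp: t_def field_simps)
      have ct: "c = t * c'" using c'n by (simp add: t_def)
      define a where "a = t *\<^sub>R y' + (1 - t) *\<^sub>R ((- \<delta>) *\<^sub>R w)"
      define b where "b = t *\<^sub>R z' + (1 - t) *\<^sub>R (\<delta> *\<^sub>R w)"
      have aQ: "a \<in> Q" unfolding a_def by (rule convexD[OF convex_Q yQ(3) d(3)]) (use t0 in auto)
      have bQ: "b \<in> Q" unfolding b_def by (rule convexD[OF convex_Q yQ(4) d(2)]) (use t0 in auto)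
      have an: "a \<bullet> n = y \<bullet> n" using ct wn by (simp add: a_def inner_add_left inner_diff_left c_def c'_def)
      have bn: "b \<bullet> n = z \<bullet> n" using ct wn cf cf' by (simp add: b_def inner_add_left inner_diff_left c_def c'_def)
      have "b - a = t *\<^sub>R (z' - y') + ((1 - t) * \<delta> + (1 - t) * \<delta>) *\<^sub>R w"
        by (simp add: a_def b_def vec2_eq algebra_simps)
      also have "\<dots> = (t * m' + 2 * (1 - t) * \<delta>) *\<^sub>R w" unfolding assms(11) by (simp add: vec2_eq algebra_simps)
      finally have ba: "b - a = (t * m' + 2 * (1 - t) * \<delta>) *\<^sub>R w" .
      have "t * m' + 2 * (1 - t) * \<delta> \<le> m"
        using CM[OF assms(1,2,3) _ assms(4) _ aQ bQ an bn ba assms(5)] cf by simp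
      moreover have "0 < 2 * (1 - t) * \<delta>" using t0 d by simp
      ultimately have "t * m' < m" by linarith
      then have "c' * m < c' * (t * m')" using c'n by (simp add: mult_less_cancel_left_neg)
      then show ?thesis using ct by (simp add: c_def c'_def algebra_simps)
    next
      case False
      then have "c' * m < 0" "0 < c * m'" using c'neg assms(6,12)
        by (simp_all add: mult_neg_pos)
      then show ?thesis by (simp add: c_def c'_def)
    qed
  qed
qed

lemma lab_chord:
  assumes "q - p = w" "has_label k v p q x (i, j)"
  shows "\<exists>lam y z. lam > 0 \<and> i < k \<and> j < k \<and> y \<in> os i \<and> z \<in> os j \<and> p = x + lam *\<^sub>R y \<and> z - y = (1 / lam) *\<^sub>R w"
proof -
  have pq: "p \<noteq> q" using assms(1) w0 by auto
  obtain lam y z where h: "i < k" "j < k" "lam > 0" "y \<in> os i" "z \<in> os j"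
    "p = x + lam *\<^sub>R y" "q = x + lam *\<^sub>R z"
    using assms(2) HL[OF pq] by blast
  have "w = lam *\<^sub>R (z - y)" using assms(1) h(6,7) by (simp add: algebra_simps)
  then have "(1 / lam) *\<^sub>R w = z - y" using h(3) by simp
  then show ?thesis using h by metis
qed

lemma S_ne:
  assumes "q - p = w"
  shows "(\<exists>x. has_label k v p q x l) \<longleftrightarrow> l \<in> Lc w"
proof -
  obtain i j where l: "l = (i, j)" by (cases l) auto
  have pq: "p \<noteq> q" using assms(1) w0 by auto
  show ?thesis
  proof
    assume "\<exists>x. has_label k v p q x l"
    then obtain x where "has_label k v p q x (i, j)" using l by auto
    then obtain lam y z where h: "lam > 0" "i < k" "j < k" "y \<in> os i" "z \<in> os j" "z - y = (1 / lam) *\<^sub>R w"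
      using lab_chord[OF assms] by blast
    show "l \<in> Lc w" using lab_in[OF h(2-6)] h(1) l by simp
  next
    assume "l \<in> Lc w"
    then obtain y z m where h: "y \<in> os i" "z \<in> os j" "m > 0" "z - y = m *\<^sub>R w"
      using lab_ex l by blast
    have ij: "i < k" "j < k" using \<open>l \<in> Lc w\<close> l by (auto simp: Lc_def)
    define x where "x = p - (1 / m) *\<^sub>R y"
    have "p = x + (1 / m) *\<^sub>R y" by (simp add: x_def)
    moreover have "q = x + (1 / m) *\<^sub>R z"
    proof -
      have "x + (1 / m) *\<^sub>R z = p + (1 / m) *\<^sub>R (z - y)" by (simp add: x_def algebra_simps)
      also have "\<dots> = p + w" using h(3,4) by simp
      finally show ?thesis using assms by (simp add: algebra_simps)
    qed
    ultimately have "has_label k v p q x (i, j)"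
      using HL[OF pq] ij h by (metis divide_pos_pos zero_less_one)
    then show "\<exists>x. has_label k v p q x l" using l by blast
  qed
qed

lemma S_conv:
  assumes "q - p = w"
  shows "convex {x. has_label k v p q x l}"
proof (rule convexI)
  obtain i j where l: "l = (i, j)" by (cases l) auto
  have pq: "p \<noteq> q" using assms(1) w0 by auto
  fix x1 x2 :: "real^2" and u1 u2 :: real
  assume a: "x1 \<in> {x. has_label k v p q x l}" "x2 \<in> {x. has_label k v p q x l}"
    "0 \<le> u1" "0 \<le> u2" "u1 + u2 = 1"
  obtain l1 y1 z1 where h1: "i < k" "j < k" "l1 > 0" "y1 \<in> os i" "z1 \<in> os j"
    "p = x1 + l1 *\<^sub>R y1" "q = x1 + l1 *\<^sub>R z1"
    using a(1) HL[OF pq] l by auto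
  obtain l2 y2 z2 where h2: "l2 > 0" "y2 \<in> os i" "z2 \<in> os j"
    "p = x2 + l2 *\<^sub>R y2" "q = x2 + l2 *\<^sub>R z2"
    using a(2) HL[OF pq] l by auto
  define lam where "lam = u1 * l1 + u2 * l2"
  have lp: "lam > 0"
  proof (cases "u1 = 0")
    case True then show ?thesis using a h2 by (simp add: lam_def)
  next
    case False then show ?thesis using a h1 h2 by (simp add: lam_def add_pos_nonneg)
  qed
  define y where "y = (u1 * l1 / lam) *\<^sub>R y1 + (u2 * l2 / lam) *\<^sub>R y2"
  define z where "z = (u1 * l1 / lam) *\<^sub>R z1 + (u2 * l2 / lam) *\<^sub>R z2"
  have co: "0 \<le> u1 * l1 / lam" "0 \<le> u2 * l2 / lam" "u1 * l1 / lam + u2 * l2 / lam = 1"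
    using a h1 h2 lp by (auto simp: lam_def add_divide_distrib[symmetric])
  have yo: "y \<in> os i" unfolding y_def os_def
    by (rule convexD[OF convex_open_segment]) (use h1 h2 co in \<open>auto simp: os_def\<close>)
  have zo: "z \<in> os j" unfolding z_def os_def
    by (rule convexD[OF convex_open_segment]) (use h1 h2 co in \<open>auto simp: os_def\<close>)
  have ly: "lam *\<^sub>R y = (u1 * l1) *\<^sub>R y1 + (u2 * l2) *\<^sub>R y2" using lp by (simp add: y_def algebra_simps)
  have lz: "lam *\<^sub>R z = (u1 * l1) *\<^sub>R z1 + (u2 * l2) *\<^sub>R z2" using lp by (simp add: z_def algebra_simps)
  have pp: "p = u1 *\<^sub>R p + u2 *\<^sub>R p" using a(5) by (metis scaleR_add_left scaleR_one)
  have qq: "q = u1 *\<^sub>R q + u2 *\<^sub>R q" using a(5) by (metis scaleR_add_left scaleR_one)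
  have P: "p = (u1 *\<^sub>R x1 + u2 *\<^sub>R x2) + lam *\<^sub>R y"
  proof -
    have "(u1 *\<^sub>R x1 + u2 *\<^sub>R x2) + lam *\<^sub>R y = u1 *\<^sub>R (x1 + l1 *\<^sub>R y1) + u2 *\<^sub>R (x2 + l2 *\<^sub>R y2)"
      using ly by (simp add: algebra_simps)
    also have "\<dots> = p" using h1(6) h2(4) pp by simp
    finally show ?thesis by simp
  qed
  have Q': "q = (u1 *\<^sub>R x1 + u2 *\<^sub>R x2) + lam *\<^sub>R z"
  proof -
    have "(u1 *\<^sub>R x1 + u2 *\<^sub>R x2) + lam *\<^sub>R z = u1 *\<^sub>R (x1 + l1 *\<^sub>R z1) + u2 *\<^sub>R (x2 + l2 *\<^sub>R z2)"
      using lz by (simp add: algebra_simps)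
    also have "\<dots> = q" using h1(7) h2(5) qq by simp
    finally show ?thesis by simp
  qed
  have "has_label k v p q (u1 *\<^sub>R x1 + u2 *\<^sub>R x2) (i, j)"
    using HL[OF pq] h1 lp yo zo P Q' by blast
  then show "u1 *\<^sub>R x1 + u2 *\<^sub>R x2 \<in> {x. has_label k v p q x l}" using l by simp
qed

lemma edgelet_iff:
  assumes "q - p = w"
  shows "edgelet k v p q E l \<longleftrightarrow> l \<in> Lc w \<and> E = {x. has_label k v p q x l}"
proof
  assume h: "edgelet k v p q E l"
  then have "E \<noteq> {}" "E \<subseteq> {x. has_label k v p q x l}" by (auto simp: edgelet_def)
  then have "l \<in> Lc w" using S_ne[OF assms] by blast
  moreover have "E = {x. has_label k v p q x l}"
    using h S_conv[OF assms, of l] by (auto simp: edgelet_def)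
  ultimately show "l \<in> Lc w \<and> E = {x. has_label k v p q x l}" by simp
next
  assume "l \<in> Lc w \<and> E = {x. has_label k v p q x l}"
  then show "edgelet k v p q E l"
    using S_ne[OF assms, of l] S_conv[OF assms, of l] by (auto simp: edgelet_def)
qed

lemma mono_lab:
  assumes "q - p = w" "has_label k v p q x l" "has_label k v p q x' l'"
    "cv w (hi w l') \<le> cv w (lo w l)"
  shows "x \<bullet> n < x' \<bullet> n"
proof -
  obtain i j where l: "l = (i, j)" by (cases l) auto
  obtain i' j' where l': "l' = (i', j')" by (cases l') auto
  obtain lam y z where h: "lam > 0" "i < k" "j < k" "y \<in> os i" "z \<in> os j"
    "p = x + lam *\<^sub>R y" "z - y = (1 / lam) *\<^sub>R w"
    using lab_chord[OF assms(1)] assms(2) l by blast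
  obtain lam' y' z' where h': "lam' > 0" "i' < k" "j' < k" "y' \<in> os i'" "z' \<in> os j'"
    "p = x' + lam' *\<^sub>R y'" "z' - y' = (1 / lam') *\<^sub>R w"
    using lab_chord[OF assms(1)] assms(3) l' by blast
  have b1: "cv w (lo w l) < y \<bullet> n" using lab_in[OF h(2-5,7)] h(1) l by simp
  have b2: "y' \<bullet> n < cv w (hi w l')" using lab_in[OF h'(2-5,7)] h'(1) l' by simp
  have yy: "y' \<bullet> n < y \<bullet> n" using b1 b2 assms(4) by linarith
  have mc: "(y' \<bullet> n) * (1 / lam) < (y \<bullet> n) * (1 / lam')"
    using mono_chord[OF h(2-5,7) _ h'(2-5,7) _ yy] h(1) h'(1) by simp
  then have "lam' * (y' \<bullet> n) < lam * (y \<bullet> n)"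
    using h(1) h'(1) by (simp add: field_simps)
  moreover have "x \<bullet> n = p \<bullet> n - lam * (y \<bullet> n)" using h(6) by (simp add: inner_add_left)
  moreover have "x' \<bullet> n = p \<bullet> n - lam' * (y' \<bullet> n)" using h'(6) by (simp add: inner_add_left)
  ultimately show ?thesis by linarith
qed

end

lemma sorted_exists:
  fixes f :: "'a \<Rightarrow> real"
  shows "finite A \<Longrightarrow> inj_on f A \<Longrightarrow> \<exists>xs. set xs = A \<and> sorted_wrt (\<lambda>a b. f b < f a) xs"
proof (induction "card A" arbitrary: A)
  case 0
  then have "A = {}" by simp
  then show ?case by (intro exI[of _ "[]"]) simp
next
  case (Suc n)
  then have ne: "A \<noteq> {}" by auto
  have "Min (f ` A) \<in> f ` A" using Suc.prems ne by (intro Min_in) auto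
  then obtain m where m: "m \<in> A" "f m = Min (f ` A)" by auto
  have mle: "f m \<le> f a" if "a \<in> A" for a using m Suc.prems that by simp
  define B where "B = A - {m}"
  have cB: "n = card B" using Suc.hyps(2) m Suc.prems by (simp add: B_def)
  have "finite B" "inj_on f B" using Suc.prems by (auto simp: B_def inj_on_diff)
  then obtain xs where xs: "set xs = B" "sorted_wrt (\<lambda>a b. f b < f a) xs"
    using Suc.hyps(1)[OF cB] by blast
  have lt: "f m < f a" if "a \<in> B" for a
  proof -
    have "a \<in> A" "a \<noteq> m" using that by (auto simp: B_def)
    then have "f a \<noteq> f m" using Suc.prems(2) m(1) by (auto dest: inj_onD)
    then show ?thesis using mle \<open>a \<in> A\<close> by (simp add: order.not_eq_order_implies_strict)
  qed
  have "set (xs @ [m]) = A" using xs m by (auto simp: B_def)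
  moreover have "sorted_wrt (\<lambda>a b. f b < f a) (xs @ [m])"
    using xs lt by (auto simp: sorted_wrt_append)
  ultimately show ?case by blast
qed

lemma sign_conn:
  fixes f :: "'a::topological_space \<Rightarrow> real"
  assumes "connected C" "continuous_on C f" "\<forall>x\<in>C. f x \<noteq> 0" "x \<in> C" "y \<in> C"
  shows "f x < 0 \<longleftrightarrow> f y < 0"
proof -
  have con: "connected (f ` C)" using connected_continuous_image assms(1,2) by blast
  have aux: "\<not> (f a < 0 \<and> 0 < f b)" if "a \<in> C" "b \<in> C" for a b
  proof
    assume h: "f a < 0 \<and> 0 < f b"
    have "0 \<in> f ` C"
      using connectedD_interval[OF con, of "f a" "f b" 0] h that by auto
    then show False using assms(3) by auto
  qed
  show ?thesis using aux[OF assms(4,5)] aux[OF assms(5,4)] assms(3-5)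
    by (meson linorder_neqE_linordered_idom)
qed

context kg
begin

definition NP :: "real^2 \<Rightarrow> bool" where
  "NP w \<longleftrightarrow> (\<forall>a<k. \<forall>b<k. a \<noteq> b \<longrightarrow> cross2 (v b - v a) w \<noteq> 0)"
definition SAME :: "real^2 \<Rightarrow> real^2 \<Rightarrow> bool" where
  "SAME w w' \<longleftrightarrow> (\<forall>a<k. \<forall>b<k. (cross2 (v b - v a) w < 0 \<longleftrightarrow> cross2 (v b - v a) w' < 0))"

lemma kgw_I: "w \<noteq> 0 \<Longrightarrow> NP w \<Longrightarrow> kgw k v \<sigma> w"
  unfolding kgw_def kgw_axioms_def NP_def using kg_axioms by auto

lemma cv_lt: "cv w a < cv w b \<longleftrightarrow> cross2 (v b - v a) w < 0"
proof -
  have "cv w b - cv w a = - cross2 (v b - v a) w"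
    by (simp add: cv_def inner_ln_cross cross2_def algebra_simps)
  then show ?thesis by linarith
qed

lemma SAME_cv: "SAME w w' \<Longrightarrow> a < k \<Longrightarrow> b < k \<Longrightarrow> (cv w a < cv w b \<longleftrightarrow> cv w' a < cv w' b)"
  by (simp add: SAME_def cv_lt)

lemma SAME_cvle: "SAME w w' \<Longrightarrow> a < k \<Longrightarrow> b < k \<Longrightarrow> (cv w a \<le> cv w b \<longleftrightarrow> cv w' a \<le> cv w' b)"
  using SAME_cv[of w w' b a] by (simp add: not_less[symmetric])

lemma mn_in: "mn c a b = a \<or> mn c a b = b" and mx_in: "mx c a b = a \<or> mx c a b = b"
  by (simp_all add: mn_def mx_def)

lemma SAME_mn: "SAME w w' \<Longrightarrow> a < k \<Longrightarrow> b < k \<Longrightarrow> mn (cv w) a b = mn (cv w') a b"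
  using SAME_cvle by (simp add: mn_def)

lemma SAME_mx: "SAME w w' \<Longrightarrow> a < k \<Longrightarrow> b < k \<Longrightarrow> mx (cv w) a b = mx (cv w') a b"
  using SAME_cvle by (simp add: mx_def)

lemma mn_lt: "a < k \<Longrightarrow> b < k \<Longrightarrow> mn c a b < k" and mx_lt: "a < k \<Longrightarrow> b < k \<Longrightarrow> mx c a b < k"
  using mn_in[of c a b] mx_in[of c a b] by auto

lemma lohi_lt: "fst l < k \<Longrightarrow> snd l < k \<Longrightarrow> lo w l < k \<and> hi w l < k"
  by (simp add: lo_def hi_def mn_lt mx_lt nx_lt)

lemma SAME_lohi:
  assumes "SAME w w'" "fst l < k" "snd l < k"
  shows "lo w l = lo w' l \<and> hi w l = hi w' l"
proof -
  have n: "nx (fst l) < k" "nx (snd l) < k" using assms nx_lt by auto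
  show ?thesis
    unfolding lo_def hi_def
    using SAME_mn[OF assms(1)] SAME_mx[OF assms(1)] assms(2,3) n mn_lt mx_lt by metis
qed

lemma SAME_ent:
  assumes "SAME w w'" "NP w" "NP w'" "i < k"
  shows "(ent w i \<longleftrightarrow> ent w' i) \<and> (ext w i \<longleftrightarrow> ext w' i)"
proof -
  have n: "nx i < k" "nx i \<noteq> i" using assms nx_lt nx_ne by auto
  have X: "cross2 (e i) w \<noteq> 0" "cross2 (e i) w' \<noteq> 0"
    using assms(2,3) n assms(4) unfolding NP_def e_def by metis+
  have Y: "cross2 (e i) w < 0 \<longleftrightarrow> cross2 (e i) w' < 0"
    using assms(1) n assms(4) unfolding SAME_def e_def by metis
  show ?thesis using sig X Y
    by (auto simp: ent_def ext_def linorder_neq_iff)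
qed

lemma SAME_Lc:
  assumes "SAME w w'" "NP w" "NP w'"
  shows "Lc w = Lc w'"
proof -
  have "l \<in> Lc w \<longleftrightarrow> l \<in> Lc w'" for l
  proof (cases "fst l < k \<and> snd l < k")
    case True
    have lh: "lo w l = lo w' l" "hi w l = hi w' l" using SAME_lohi[OF assms(1)] True by auto
    have "cv w (lo w l) < cv w (hi w l) \<longleftrightarrow> cv w' (lo w' l) < cv w' (hi w' l)"
      using SAME_cv[OF assms(1)] lohi_lt True lh by metis
    then show ?thesis using SAME_ent[OF assms] True by (auto simp: Lc_def)
  next
    case False then show ?thesis by (auto simp: Lc_def)
  qed
  then show ?thesis by auto
qed

lemma SAME_key:
  assumes "SAME w w'" "l \<in> Lc w" "l' \<in> Lc w"
  shows "cv w (lo w l) < cv w (lo w l') \<longleftrightarrow> cv w' (lo w' l) < cv w' (lo w' l')"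
proof -
  have b: "fst l < k" "snd l < k" "fst l' < k" "snd l' < k" using assms by (auto simp: Lc_def)
  have "lo w l = lo w' l" "lo w l' = lo w' l'" using SAME_lohi[OF assms(1)] b by auto
  moreover have "lo w l < k" "lo w l' < k" using lohi_lt b by auto
  ultimately show ?thesis using SAME_cv[OF assms(1)] by metis
qed

lemma SAME_scale: "r > 0 \<Longrightarrow> SAME w (r *\<^sub>R w)"
  by (simp add: SAME_def cross2_scaleR_right mult_less_0_iff)

lemma SAME_sym: "SAME w w' \<Longrightarrow> SAME w' w"
  by (simp add: SAME_def)

lemma SAME_trans: "SAME w w' \<Longrightarrow> SAME w' w'' \<Longrightarrow> SAME w w''"
  by (simp add: SAME_def)

lemma dir_in: "a < k \<Longrightarrow> b < k \<Longrightarrow> a \<noteq> b \<Longrightarrow> sgn (v b - v a) \<in> directions k v"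
  unfolding directions_def by blast

lemma np_dir:
  assumes "d \<noteq> 0" "sgn d \<notin> directions k v"
  shows "NP d"
  unfolding NP_def
proof (intro allI impI)
  fix a b assume ab: "a < k" "b < k" "a \<noteq> b"
  show "cross2 (v b - v a) d \<noteq> 0"
  proof
    assume c0: "cross2 (v b - v a) d = 0"
    define E where "E = v b - v a"
    have E0: "E \<noteq> 0" using v_inj ab by (auto simp: E_def)
    have "d \<bullet> left_normal E = 0" using c0 by (simp add: E_def cross2_inner inner_commute)
    then have dE: "d = ((d \<bullet> E) / (E \<bullet> E)) *\<^sub>R E" by (rule par2[OF E0])
    define \<alpha> where "\<alpha> = (d \<bullet> E) / (E \<bullet> E)"
    have a0: "\<alpha> \<noteq> 0" using dE assms(1) by (auto simp: \<alpha>_def)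
    have "sgn d = sgn (\<alpha> *\<^sub>R E)" using arg_cong[OF dE, of sgn] by (simp only: \<alpha>_def)
    then have sd: "sgn d = sgn \<alpha> *\<^sub>R sgn E" by (simp only: sgn_scaleR)
    show False
    proof (cases "\<alpha> > 0")
      case True
      then have "sgn d = sgn (v b - v a)" using sd by (simp add: E_def)
      then show False using assms(2) dir_in[OF ab] by simp
    next
      case False
      then have "\<alpha> < 0" using a0 by simp
      then have "sgn d = sgn (v a - v b)" using sd by (simp add: E_def sgn_minus[symmetric])
      then show False using assms(2) dir_in[OF ab(2,1)] ab(3) by simp
    qed
  qed
qed

lemma SAME_conn:
  assumes "connected C" "\<forall>d\<in>C. NP d" "d \<in> C" "d' \<in> C"
  shows "SAME d d'"
  unfolding SAME_def
proof (intro allI impI)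
  fix a b assume ab: "a < k" "b < k"
  show "cross2 (v b - v a) d < 0 \<longleftrightarrow> cross2 (v b - v a) d' < 0"
  proof (cases "a = b")
    case True then show ?thesis by (simp add: cross2_def)
  next
    case False
    have ct: "continuous_on C (\<lambda>x. left_normal (v b - v a) \<bullet> x)" by (intro continuous_intros)
    have nz: "\<forall>x\<in>C. left_normal (v b - v a) \<bullet> x \<noteq> 0"
      using assms(2) ab False by (auto simp: NP_def cross2_inner)
    show ?thesis using sign_conn[OF assms(1) ct nz assms(3,4)] by (simp add: cross2_inner)
  qed
qed

end

theorem corollary3:
  fixes k :: nat and v :: "nat \<Rightarrow> real^2"
  assumes "convex_kgon k v"
    and "0 \<in> interior (polygon k v)"
  shows "\<forall>u \<in> sphere 0 1 - directions k v. \<exists>L. \<forall>p q.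
           p \<noteq> q \<and> sgn (q - p) \<in> connected_component_set (sphere 0 1 - directions k v) u
           \<longrightarrow> edgelet_label_sequence k v p q L"
proof -
  obtain \<sigma> where kgs: "kg k v \<sigma>"
  proof (cases "\<forall>i<k. \<forall>j<k. j \<noteq> i \<and> j \<noteq> Suc i mod k \<longrightarrow>
          0 < cross2 (v (Suc i mod k) - v i) (v j - v i)")
    case True
    then have "kg k v 1" using assms unfolding kg_def convex_kgon_def by auto
    then show ?thesis using that by blast
  next
    case False
    then have "kg k v (-1)" using assms unfolding kg_def convex_kgon_def by auto
    then show ?thesis using that by blast
  qed
  interpret kg k v \<sigma> by (rule kgs)
  show ?thesis
  proof
    fix u assume u: "u \<in> sphere 0 1 - directions k v"
    define C where "C = connected_component_set (sphere 0 1 - directions k v) u"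
    have Csub: "C \<subseteq> sphere 0 1 - directions k v" unfolding C_def by (rule connected_component_subset)
    have uC: "u \<in> C" unfolding C_def using u by (simp add: connected_component_refl)
    have Ccon: "connected C" unfolding C_def by simp
    have sg1: "sgn x = x" if "x \<in> sphere 0 1" for x :: "real^2"
      using that by (simp add: sgn_div_norm)
    have CNP: "\<forall>d\<in>C. NP d"
    proof
      fix d assume "d \<in> C"
      then have d: "d \<in> sphere 0 1" "d \<notin> directions k v" using Csub by auto
      then have "d \<noteq> 0" by auto
      then show "NP d" using np_dir d sg1 by simp
    qed
    have NPu: "NP u" using CNP uC by simp
    have u0: "u \<noteq> 0" using u by auto
    interpret U: kgw k v \<sigma> u by (rule kgw_I[OF u0 NPu])
    define f where "f l = cv u (lo u l)" for l
    have inj: "inj_on f (Lc u)"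
    proof (rule inj_onI)
      fix l l' assume h: "l \<in> Lc u" "l' \<in> Lc u" "f l = f l'"
      show "l = l'"
      proof (rule ccontr)
        assume "l \<noteq> l'"
        then have "cv u (hi u l') \<le> cv u (lo u l) \<or> cv u (hi u l) \<le> cv u (lo u l')"
          using U.total h by blast
        then show False using U.lo_lt_hi[OF h(1)] U.lo_lt_hi[OF h(2)] h(3) by (auto simp: f_def)
      qed
    qed
    obtain L where L: "set L = Lc u" "sorted_wrt (\<lambda>a b. f b < f a) L"
      using sorted_exists[OF Lc_fin inj] by blast
    show "\<exists>L. \<forall>p q. p \<noteq> q \<and> sgn (q - p) \<in> connected_component_set (sphere 0 1 - directions k v) u
           \<longrightarrow> edgelet_label_sequence k v p q L"
    proof (intro exI allI impI)
      fix p q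
      assume pq: "p \<noteq> q \<and> sgn (q - p) \<in> connected_component_set (sphere 0 1 - directions k v) u"
      define w where "w = q - p"
      have w0: "w \<noteq> 0" using pq by (auto simp: w_def)
      have dC: "sgn w \<in> C" using pq by (simp add: C_def w_def)
      have "sgn w \<notin> directions k v" using dC Csub by auto
      then have NPw: "NP w" by (rule np_dir[OF w0])
      interpret W: kgw k v \<sigma> w by (rule kgw_I[OF w0 NPw])
      have "SAME (sgn w) w"
      proof -
        have "w = norm w *\<^sub>R sgn w" using w0 by (simp add: sgn_div_norm)
        moreover have "norm w > 0" using w0 by simp
        ultimately show ?thesis using SAME_scale[of "norm w" "sgn w"] by simp
      qed
      moreover have "SAME (sgn w) u" using SAME_conn[OF Ccon CNP dC uC] .
      ultimately have S: "SAME w u" using SAME_sym SAME_trans by blast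
      have Lcw: "Lc w = Lc u" by (rule SAME_Lc[OF S NPw NPu])
      have key: "cv w (lo w l) < cv w (lo w l') \<longleftrightarrow> f l < f l'" if "l \<in> Lc w" "l' \<in> Lc w" for l l'
        using SAME_key[OF S that] by (simp add: f_def)
      define Es where "Es = map (\<lambda>l. ({x. has_label k v p q x l}, l)) L"
      have wd: "q - p = w" by (simp add: w_def)
      have setEs: "set Es = {(E, l). edgelet k v p q E l}"
        unfolding Es_def using W.edgelet_iff[OF wd] L(1) Lcw by auto
      have srt: "sorted_wrt (\<lambda>a b. \<forall>x\<in>fst a. \<forall>y\<in>fst b.
              x \<bullet> left_normal (q - p) < y \<bullet> left_normal (q - p)) Es"
        unfolding Es_def sorted_wrt_map
      proof (rule sorted_wrt_mono_rel[OF _ L(2)])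
        fix l l' assume h: "l \<in> set L" "l' \<in> set L" "f l' < f l"
        have hl: "l \<in> Lc w" "l' \<in> Lc w" using h L(1) Lcw by auto
        have lt: "cv w (lo w l') < cv w (lo w l)" using key[OF hl(2,1)] h(3) by simp
        then have "l \<noteq> l'" by auto
        then have "cv w (hi w l') \<le> cv w (lo w l) \<or> cv w (hi w l) \<le> cv w (lo w l')"
          using W.total hl by blast
        then have hh: "cv w (hi w l') \<le> cv w (lo w l)" using W.lo_lt_hi[OF hl(1)] lt by auto
        show "\<forall>x\<in>fst ({x. has_label k v p q x l}, l). \<forall>y\<in>fst ({x. has_label k v p q x l'}, l').
              x \<bullet> left_normal (q - p) < y \<bullet> left_normal (q - p)"
          using W.mono_lab[OF wd _ _ hh] by (simp add: w_def)
      qed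
      have "L = map snd Es" by (simp add: Es_def comp_def)
      then show "edgelet_label_sequence k v p q L"
        unfolding edgelet_label_sequence_def using setEs srt by blast
    qed
  qed
qed

end
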